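(* Let $A$ and $B$ be finite commutative groups. Fix any isomorphism $\psi:\mathbb{Z}_{q_1}\times\cdots\times\mathbb{Z}_{q_n}\to A$ with positive integers $q_1,\dots,q_n$, and call a map $f:A\to B$ polyfractal if there is a $B$-polyfract $P$ in $X_1,\dots,X_n$ with $P(x)=f(\psi(x_1+q_1\mathbb{Z},\dots,x_n+q_n\mathbb{Z}))$ for all $x\in\mathbb{Z}^n$. Then $$\{f\in B^A : f\text{ is polyfractal}\}=\prod_{p\ \text{prime}}B_p^{A_p},$$ where $A_p$ and $B_p$ are the $p$-primary components of $A$ and $B$, and $\prod_p B_p^{A_p}$ denotes the set of maps $A=\prod_p A_p\to B=\prod_p B_p$ of the form $(a_p)_p\mapsto (f_p(a_p))_p$ with arbitrary $f_p:A_p\to B_p$. In particular this set does not depend on the chosen cyclic decomposition $\psi$.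
   Context: Notation: $\mathbb{Z}_r=\mathbb{Z}/r\mathbb{Z}$. For $\delta\in\mathbb{N}$, $\binom{X}{\delta}=X(X-1)\cdots(X-\delta+1)/\delta!$, $\binom{X}{0}=1$. For a finitely generated commutative group $B$, a $B$-polyfract in $X_1,\dots,X_n$ is a formal finite sum $P=\sum_{\delta\in\mathbb{N}^n}P_\delta\prod_{j=1}^n\binom{X_j}{\delta_j}$ with $P_\delta\in B$, evaluated at $x\in\mathbb{Z}^n$ by $P(x)=\sum_\delta\big(\prod_j\binom{x_j}{\delta_j}\big)P_\delta\in B$. *)

theory Defs
  imports "HOL-Computational_Algebra.Primes"
begin

definition zsmul :: "int \<Rightarrow> 'b::ab_group_add \<Rightarrow> 'b" where
  "zsmul k b = (if 0 \<le> k then (\<Sum>_\<in>{..<nat k}. b) else - (\<Sum>_\<in>{..<nat (-k)}. b))"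

definition ibinom :: "int \<Rightarrow> nat \<Rightarrow> int" where
  "ibinom x d = (\<Prod>i<d. x - int i) div fact d"

text \<open>Evaluation of the B-polyfract with finite support D and coefficients c
  in the variables X_0,...,X_(n-1) at the point x in Z^n.\<close>
definition polyfract_eval ::
  "nat \<Rightarrow> (nat \<Rightarrow> nat) set \<Rightarrow> ((nat \<Rightarrow> nat) \<Rightarrow> 'b::ab_group_add) \<Rightarrow> (nat \<Rightarrow> int) \<Rightarrow> 'b" where
  "polyfract_eval n D c x = (\<Sum>\<delta>\<in>D. zsmul (\<Prod>j<n. ibinom (x j) (\<delta> j)) (c \<delta>))"

text \<open>Z_{q_0} x ... x Z_{q_(n-1)} represented by standard representatives.\<close>
definition Zq :: "(nat \<Rightarrow> int) \<Rightarrow> nat \<Rightarrow> (nat \<Rightarrow> int) set" where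
  "Zq q n = {u. (\<forall>j<n. 0 \<le> u j \<and> u j < q j) \<and> (\<forall>j\<ge>n. u j = 0)}"

definition redq :: "(nat \<Rightarrow> int) \<Rightarrow> nat \<Rightarrow> (nat \<Rightarrow> int) \<Rightarrow> (nat \<Rightarrow> int)" where
  "redq q n x = (\<lambda>j. if j < n then x j mod q j else 0)"

definition cyc_iso :: "(nat \<Rightarrow> int) \<Rightarrow> nat \<Rightarrow> ((nat \<Rightarrow> int) \<Rightarrow> 'a::ab_group_add) \<Rightarrow> bool" where
  "cyc_iso q n \<psi> \<longleftrightarrow> (\<forall>j<n. 0 < q j) \<and> bij_betw \<psi> (Zq q n) UNIV \<and>
     (\<forall>u\<in>Zq q n. \<forall>v\<in>Zq q n. \<psi> (redq q n (\<lambda>j. u j + v j)) = \<psi> u + \<psi> v)"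

definition polyfractal ::
  "(nat \<Rightarrow> int) \<Rightarrow> nat \<Rightarrow> ((nat \<Rightarrow> int) \<Rightarrow> 'a::ab_group_add) \<Rightarrow> ('a \<Rightarrow> 'b::ab_group_add) \<Rightarrow> bool" where
  "polyfractal q n \<psi> f \<longleftrightarrow> (\<exists>D c. finite D \<and>
     (\<forall>x. polyfract_eval n D c x = f (\<psi> (redq q n x))))"

definition primary :: "nat \<Rightarrow> 'a::ab_group_add set" where
  "primary p = {a. \<exists>k. zsmul (int (p ^ k)) a = 0}"

text \<open>prod_p B_p^{A_p}: maps acting componentwise on the primary decomposition.
  Only primes dividing |A|*|B| matter: for all other primes A_p = B_p = 0.\<close>
definition primary_prod_maps :: "('a::{ab_group_add,finite} \<Rightarrow> 'b::{ab_group_add,finite}) set" where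
  "primary_prod_maps = {f. \<exists>F :: nat \<Rightarrow> 'a \<Rightarrow> 'b.
     let S = {p. prime p \<and> p dvd card (UNIV :: 'a set) * card (UNIV :: 'b set)} in
     (\<forall>p\<in>S. \<forall>a\<in>primary p. F p a \<in> primary p) \<and>
     (\<forall>a :: nat \<Rightarrow> 'a. (\<forall>p\<in>S. a p \<in> primary p) \<longrightarrow>
        f (\<Sum>p\<in>S. a p) = (\<Sum>p\<in>S. F p (a p)))}"

end

theory Submission
  imports Defs "HOL-Computational_Algebra.Polynomial" "HOL-Library.FuncSet"
begin

lemma ibinom_Suc_Suc: "ibinom (x+1) (Suc k) = ibinom x k + ibinom x (Suc k)"
  using gbinomial_int_Suc_Suc[of x k] unfolding gbinomial_prod_rev ibinom_def by (simp add: atLeast0LessThan)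
lemma ibinom_0[simp]: "ibinom x 0 = 1" unfolding ibinom_def by simp
lemma ibinom_0_Suc[simp]: "ibinom 0 (Suc k) = 0"
proof -
  have h: "(\<Prod>i<Suc k. 0 - int i) = 0" by (rule prod_zero) auto
  show ?thesis unfolding ibinom_def h by simp
qed

lemma zsmul_0[simp]: "zsmul 0 b = 0" by (simp add: zsmul_def)
lemma zsmul_nat: "zsmul (int m) b = (\<Sum>_\<in>{..<m}. b)" by (simp add: zsmul_def)
lemma zsmul_Suc: "zsmul (k+1) b = zsmul k b + b"
proof (cases "k \<ge> 0")
  case True
  then have "nat (k+1) = Suc (nat k)" by simp
  with True show ?thesis by (simp add: zsmul_def)
next
  case False
  show ?thesis
  proof (cases "k = -1")
    case True thus ?thesis by (simp add: zsmul_def)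
  next
    case F2: False
    with False have e: "nat (-k) = Suc (nat (-(k+1)))" by simp
    from False F2 have "\<not> 0 \<le> k+1" by simp
    with False e show ?thesis by (simp add: zsmul_def)
  qed
qed
lemma zsmul_add: "zsmul (a + c) b = zsmul a b + zsmul c b"
proof (induction c rule: int_induct[where k=0])
  case base thus ?case by simp
next
  case (step1 i) thus ?case using zsmul_Suc[of "a+i" b] zsmul_Suc[of i b] by (simp add: add.assoc[symmetric])
next
  case (step2 i) thus ?case using zsmul_Suc[of "a+(i - 1)" b] zsmul_Suc[of "i - 1" b] by (simp add: algebra_simps)
qed
lemma zsmul_1[simp]: "zsmul 1 b = b" using zsmul_Suc[of 0 b] by simp
lemma zsmul_uminus: "zsmul (-a) b = - zsmul a b" using zsmul_add[of a "-a" b] by (metis minus_unique add.right_inverse zsmul_0)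
lemma zsmul_diff: "zsmul (a - c) b = zsmul a b - zsmul c b" using zsmul_add[of a "-c" b] by (simp add: zsmul_uminus)
lemma zsmul_zero[simp]: "zsmul a (0::'b::ab_group_add) = 0"
  by (induction a rule: int_induct[where k=0]) (auto simp: zsmul_add zsmul_diff)
lemma zsmul_plus: "zsmul a (b + c) = zsmul a b + zsmul a (c::'b::ab_group_add)"
  by (induction a rule: int_induct[where k=0]) (auto simp: zsmul_add zsmul_diff algebra_simps)
lemma zsmul_neg: "zsmul a (- b) = - zsmul a (b::'b::ab_group_add)"
  using zsmul_plus[of a b "-b"] by (metis minus_unique add.right_inverse zsmul_zero)
lemma zsmul_minus: "zsmul a (b - c) = zsmul a b - zsmul a (c::'b::ab_group_add)"
  using zsmul_plus[of a b "-c"] by (simp add: zsmul_neg)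
lemma zsmul_mult: "zsmul (a * c) b = zsmul a (zsmul c (b::'b::ab_group_add))"
  by (induction a rule: int_induct[where k=0]) (auto simp: zsmul_add zsmul_diff algebra_simps)
lemma zsmul_sum: "zsmul a (\<Sum>i\<in>I. f i) = (\<Sum>i\<in>I. zsmul a (f i::'b::ab_group_add))"
  by (induction I rule: infinite_finite_induct) (auto simp: zsmul_plus)
lemma sum_zsmul: "zsmul (\<Sum>i\<in>I. f i) b = (\<Sum>i\<in>I. zsmul (f i) (b::'b::ab_group_add))"
  by (induction I rule: infinite_finite_induct) (auto simp: zsmul_add)
lemma zsmul_int[simp]: "zsmul a (x::int) = a * x"
  by (induction a rule: int_induct[where k=0]) (auto simp: zsmul_add zsmul_diff algebra_simps)
lemma sum_const_zsmul: "finite A \<Longrightarrow> (\<Sum>_\<in>A. b) = zsmul (int (card A)) b"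
  by (induction A rule: finite_induct) (auto simp: zsmul_add)
lemma zsmul_card: fixes a :: "'a::{ab_group_add,finite}" shows "zsmul (int (card (UNIV::'a set))) a = 0"
proof -
  have "(\<Sum>x\<in>UNIV. a + x) = (\<Sum>x\<in>(UNIV::'a set). x)"
    by (rule sum.reindex_bij_betw) (auto simp: bij_betw_def inj_on_def intro!: image_eqI[of _ _ "x - a" for x])
  hence "zsmul (int (card (UNIV::'a set))) a + (\<Sum>x\<in>UNIV. x) = (\<Sum>x\<in>(UNIV::'a set). x)"
    by (simp add: sum.distrib sum_const_zsmul)
  thus ?thesis by simp
qed
lemma zsmul_gcd: "zsmul x b = 0 \<Longrightarrow> zsmul y b = 0 \<Longrightarrow> zsmul (gcd x y) (b::'b::ab_group_add) = 0"
  using bezout_int[of x y] by (metis (no_types) add.right_neutral mult.commute zsmul_add zsmul_mult zsmul_zero)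
lemma zsmul_dvd: "zsmul x b = 0 \<Longrightarrow> x dvd y \<Longrightarrow> zsmul y (b::'b::ab_group_add) = 0"
  by (auto simp: mult.commute zsmul_mult elim!: dvdE)



definition dlt :: "(int \<Rightarrow> 'b::ab_group_add) \<Rightarrow> int \<Rightarrow> 'b" where
  "dlt h t = h (t+1) - h t"

definition act :: "int poly \<Rightarrow> (int \<Rightarrow> 'b::ab_group_add) \<Rightarrow> int \<Rightarrow> 'b" where
  "act P h t = (\<Sum>i\<le>degree P. zsmul (coeff P i) (h (t + int i)))"

lemma act_bound: "degree P < K \<Longrightarrow> act P h t = (\<Sum>i<K. zsmul (coeff P i) (h (t + int i)))"
  unfolding act_def
  by (rule sum.mono_neutral_left) (auto simp: coeff_eq_0)

lemma act_add: "act (P+Q) h t = act P h t + act Q h t"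
proof -
  define K where "K = Suc (max (degree P) (degree Q))"
  have "degree (P+Q) < K" "degree P < K" "degree Q < K"
    using degree_add_le[of P "max (degree P) (degree Q)" Q] by (auto simp: K_def)
  thus ?thesis by (simp add: act_bound zsmul_add sum.distrib)
qed

lemma act_smult: "act (smult c P) h t = zsmul c (act P h t)"
proof -
  have "degree (smult c P) < Suc (degree P)" "degree P < Suc (degree P)"
    using degree_smult_le[of c P] by auto
  thus ?thesis by (simp only: act_bound[where K="Suc (degree P)"] zsmul_mult zsmul_sum coeff_smult)
qed

lemma act_zero[simp]: "act 0 h t = 0" by (simp add: act_def)

lemma act_pCons: "act (pCons a P) h t = zsmul a (h t) + act P h (t+1)"
proof -
  have "degree (pCons a P) < Suc (Suc (degree P))" "degree P < Suc (degree P)"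
    using degree_pCons_le[of a P] by auto
  then have "act (pCons a P) h t = zsmul a (h t) + (\<Sum>i<Suc (degree P). zsmul (coeff P i) (h (t + int (Suc i))))"
    by (simp only: act_bound[where K="Suc (Suc (degree P))"] sum.lessThan_Suc_shift coeff_pCons_0 coeff_pCons_Suc) simp
  also have "\<dots> = zsmul a (h t) + act P h (t+1)"
    by (simp add: act_bound[where K="Suc (degree P)" and P=P] algebra_simps del: sum.lessThan_Suc)
  finally show ?thesis .
qed

lemma act_mult: "act (P * Q) h t = act P (act Q h) t"
proof (induction P arbitrary: t)
  case 0 thus ?case by simp
next
  case (pCons a P)
  show ?case by (simp add: act_add act_smult act_pCons pCons.IH)
qed

lemma act_const: "act [:c:] h t = zsmul c (h t)"
  using act_pCons[of c 0 h t] by simp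

lemma act_one: "act 1 h t = h t"
  using act_const[of 1 h t] by (simp add: one_pCons)

lemma act_diff: "act (P - Q) h t = act P h t - act Q h t"
  using act_add[of "P - Q" Q h t] by simp

lemma act_monom: "act (monom 1 k) h t = h (t + int k)"
proof -
  have "degree (monom (1::int) k) < Suc k" using degree_monom_le[of "1::int" k] by simp
  thus ?thesis by (simp add: act_bound[where K="Suc k"] if_distrib cong: if_cong)
qed

lemma act_dlt: "act [:-1, 1:] h = dlt h"
  by (rule ext) (simp add: act_pCons act_const dlt_def zsmul_uminus)

lemma act_power: "act (P ^ k) h = (act P ^^ k) h"
proof (induction k)
  case 0 thus ?case by (simp add: act_one[abs_def])
next
  case (Suc k) show ?case by (rule ext) (simp add: act_mult Suc.IH)
qed

lemma act_dlt_power: fixes h :: "int \<Rightarrow> 'b::ab_group_add" shows "act ([:-1, 1:] ^ k) h = (dlt ^^ k) h"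
proof -
  have "act [:-1,1:] = (dlt :: (int \<Rightarrow> 'b) \<Rightarrow> int \<Rightarrow> 'b)" by (rule ext) (rule act_dlt)
  thus ?thesis by (simp add: act_power)
qed

lemma act_fun_zero: "(\<And>t. h t = 0) \<Longrightarrow> act P h t = 0"
  by (simp add: act_def)




lemma ring_r_identity:
  fixes u :: "'a::comm_ring_1"
  shows "\<exists>A B. of_nat r ^ j * (u - 1) = (u^r - 1) * A + (u - 1)^(Suc j) * B"
proof -
  define R where "R = (\<Sum>i<r. \<Sum>l<i. u^l)"
  have S: "(\<Sum>i<r. u^i) - of_nat r = (u - 1) * R"
  proof -
    have "(\<Sum>i<r. u^i) - of_nat r = (\<Sum>i<r. u^i - 1)" by (simp add: sum_subtractf)
    also have "\<dots> = (\<Sum>i<r. (u - 1) * (\<Sum>l<i. u^l))" by (simp add: power_diff_1_eq)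
    finally show ?thesis by (simp add: R_def sum_distrib_left)
  qed
  have base: "of_nat r * (u - 1) = (u^r - 1) - (u - 1)^2 * R"
  proof -
    have "u^r - 1 = (u - 1) * (\<Sum>i<r. u^i)" by (rule power_diff_1_eq)
    also have "(\<Sum>i<r. u^i) = of_nat r + (u - 1) * R" using S by (simp add: algebra_simps)
    finally show ?thesis by (simp add: algebra_simps power2_eq_square)
  qed
  show ?thesis
  proof (induction j)
    case 0 show ?case by (rule exI[of _ 0], rule exI[of _ 1]) simp
  next
    case (Suc j)
    then obtain A B where AB: "of_nat r ^ j * (u - 1) = (u^r - 1) * A + (u - 1)^(Suc j) * B" by blast
    have "of_nat r ^ Suc j * (u - 1) = of_nat r * (of_nat r ^ j * (u - 1))" by (simp add: mult.assoc)
    also have "\<dots> = of_nat r * ((u^r - 1) * A + (u - 1)^(Suc j) * B)" by (simp only: AB)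
    also have "\<dots> = of_nat r * ((u^r - 1) * A) + (u-1)^j * B * (of_nat r * (u - 1))"
      by (simp add: algebra_simps)
    also have "\<dots> = (u^r - 1) * (of_nat r * A + (u-1)^j * B) + (u - 1)^(Suc (Suc j)) * (- B * R)"
      unfolding base by (simp add: algebra_simps power2_eq_square)
    finally show ?case by blast
  qed
qed

lemma ring_pow_perturb:
  fixes y C :: "'a::comm_ring_1"
  shows "\<exists>D. (y + of_nat p * C)^m = y^m + of_nat p * D"
proof (induction m)
  case 0 show ?case by (rule exI[of _ 0]) simp
next
  case (Suc m)
  then obtain D where D: "(y + of_nat p * C)^m = y^m + of_nat p * D" by blast
  have "(y + of_nat p * C)^Suc m = y^Suc m + of_nat p * (C * y^m + y * D + of_nat p * C * D)"
    unfolding power_Suc D by (simp add: algebra_simps)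
  thus ?case by blast
qed

lemma ring_frob:
  fixes y :: "'a::comm_ring_1"
  assumes p: "prime p"
  shows "\<exists>D. (y - 1)^p = y^p - 1 + of_nat p * D"
proof -
  have p1: "p > 1" using p prime_gt_1_nat by blast
  have "(y - 1)^p = (y + (-1))^p" by simp
  also have "\<dots> = (\<Sum>k\<le>p. of_nat (p choose k) * y^k * (-1)^(p-k))" by (rule binomial_ring)
  also have "{..p} = insert p (insert 0 {1..p-1})" using p1 by auto
  also have "(\<Sum>k\<in>insert p (insert 0 {1..p-1}). of_nat (p choose k) * y^k * (-1::'a)^(p-k))
     = y^p + (-1)^p + (\<Sum>k\<in>{1..p-1}. of_nat (p choose k) * y^k * (-1)^(p-k))"
    using p1 by (subst sum.insert; simp)+
  also have "(\<Sum>k\<in>{1..p-1}. of_nat (p choose k) * y^k * (-1::'a)^(p-k))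
     = of_nat p * (\<Sum>k\<in>{1..p-1}. of_nat ((p choose k) div p) * y^k * (-1)^(p-k))"
  proof -
    have "(p choose k) = p * ((p choose k) div p)" if k: "k \<in> {1..p-1}" for k
    proof -
      from k p1 have "k < p" "k \<noteq> 0" "p \<noteq> 0" by auto
      hence "p dvd (p choose k)" using dvd_choose_prime p by blast
      thus ?thesis by simp
    qed
    hence "\<And>k. k \<in> {1..p-1} \<Longrightarrow> (of_nat (p choose k) :: 'a) = of_nat p * of_nat ((p choose k) div p)"
      by (metis of_nat_mult)
    thus ?thesis by (simp add: sum_distrib_left mult.assoc)
  qed
  also have "(-1::'a)^p = -1 + of_nat p * (if p = 2 then 1 else 0)"
  proof (cases "p = 2")
    case True thus ?thesis by simp
  next
    case False
    hence "odd p" using p prime_odd_nat p1 by fastforce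
    thus ?thesis using False by simp
  qed
  finally show ?thesis by (intro exI[of _ "(if p = 2 then 1 else 0) + (\<Sum>k\<in>{1..p-1}. of_nat ((p choose k) div p) * y^k * (-1)^(p-k))"]) (simp add: algebra_simps)
qed

lemma ring_frob_pow:
  fixes x :: "'a::comm_ring_1"
  assumes p: "prime p"
  shows "\<exists>C. (x - 1)^(p^a) = x^(p^a) - 1 + of_nat p * C"
proof (induction a)
  case 0 show ?case by (rule exI[of _ 0]) simp
next
  case (Suc a)
  then obtain C where C: "(x - 1)^(p^a) = x^(p^a) - 1 + of_nat p * C" by blast
  obtain D where D: "(x^(p^a) - 1 + of_nat p * C)^p = (x^(p^a) - 1)^p + of_nat p * D"
    using ring_pow_perturb by blast
  obtain D' where D': "(x^(p^a) - 1)^p = (x^(p^a))^p - 1 + of_nat p * D'"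
    using ring_frob[OF p] by blast
  have "(x - 1)^(p^Suc a) = ((x - 1)^(p^a))^p" by (metis power_Suc2 power_mult)
  also have "\<dots> = x^(p^Suc a) - 1 + of_nat p * (D' + D)"
    unfolding C D D' by (simp add: power_mult[symmetric] mult.commute algebra_simps)
  finally show ?case by blast
qed

lemma ring_binom_ideal:
  fixes e c :: "'a::comm_ring_1"
  shows "\<exists>A. (e + c)^k = e * A + c^k"
proof (induction k)
  case 0 show ?case by (rule exI[of _ 0]) simp
next
  case (Suc k)
  then obtain A where "(e + c)^k = e * A + c^k" by blast
  hence "(e + c)^Suc k = e * ((e + c) * A + c^k) + c^Suc k" by (simp add: algebra_simps)
  thus ?case by blast
qed

lemma ring_nilp:
  fixes x :: "'a::comm_ring_1"
  assumes p: "prime p"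
  shows "\<exists>A C. (x - 1)^(p^a * k) = (x^(p^a) - 1) * A + of_nat p ^ k * C"
proof -
  obtain C where C: "(x - 1)^(p^a) = x^(p^a) - 1 + of_nat p * C" using ring_frob_pow[OF p] by blast
  obtain A where A: "(x^(p^a) - 1 + of_nat p * C)^k = (x^(p^a) - 1) * A + (of_nat p * C)^k"
    using ring_binom_ideal by blast
  have "(x - 1)^(p^a * k) = (x^(p^a) - 1) * A + of_nat p ^ k * C^k"
    by (simp add: power_mult C A power_mult_distrib)
  thus ?thesis by blast
qed




lemma dvd_dlt_const:
  fixes g :: "int \<Rightarrow> int"
  assumes d: "\<And>t. m dvd dlt g t" and z: "m dvd g 0"
  shows "m dvd g x"
proof (induction x rule: int_induct[where k=0])
  case base thus ?case using z by simp
next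
  case (step1 i)
  have "g (i+1) = dlt g i + g i" by (simp add: dlt_def)
  thus ?case using d[of i] step1 by simp
next
  case (step2 i)
  have "g (i - 1) = g i - dlt g (i - 1)" by (simp add: dlt_def)
  thus ?case using d[of "i - 1"] step2 by simp
qed

lemma newton_mod:
  fixes h :: "int \<Rightarrow> int"
  assumes "\<And>t. m dvd (dlt ^^ M) h t"
  shows "m dvd (h x - (\<Sum>d<M. (dlt ^^ d) h 0 * ibinom x d))"
  using assms
proof (induction M arbitrary: h x)
  case 0 thus ?case by simp
next
  case (Suc M)
  define G where "G x = (\<Sum>d<Suc M. (dlt ^^ d) h 0 * ibinom x d)" for x
  have dG: "dlt G t = (\<Sum>d<M. (dlt ^^ Suc d) h 0 * ibinom t d)" for t
  proof -
    have "dlt G t = (\<Sum>d<Suc M. (dlt ^^ d) h 0 * (ibinom (t+1) d - ibinom t d))"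
      by (simp add: dlt_def G_def sum_subtractf algebra_simps)
    also have "\<dots> = (\<Sum>d<M. (dlt ^^ Suc d) h 0 * ibinom t d)"
      by (simp only: sum.lessThan_Suc_shift ibinom_Suc_Suc) simp
    finally show ?thesis .
  qed
  have fp: "(dlt ^^ d) (dlt h) = (dlt ^^ Suc d) h" for d by (simp only: funpow_Suc_right o_apply)
  have IH: "m dvd (dlt h t - (\<Sum>d<M. (dlt ^^ d) (dlt h) 0 * ibinom t d))" for t
    by (rule Suc.IH) (metis fp Suc.prems)
  have "m dvd (\<lambda>x. h x - G x) x"
  proof (rule dvd_dlt_const[where g="\<lambda>x. h x - G x"])
    fix t
    have "dlt (\<lambda>x. h x - G x) t = dlt h t - dlt G t" by (simp add: dlt_def)
    thus "m dvd dlt (\<lambda>x. h x - G x) t" using IH[of t] by (simp add: dG fp)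
  next
    have "G 0 = h 0" by (simp add: G_def sum.lessThan_Suc_shift del: sum.lessThan_Suc)
    thus "m dvd h 0 - G 0" by simp
  qed
  thus ?case by (simp add: G_def)
qed

lemma const_poly_power: "[:c:]^k = [:c^k:]"
  by (induction k) (simp_all add: one_pCons mult.commute)

lemma X_minus_1: "[:0,1:] - 1 = ([:-1, 1:] :: int poly)"
  by (simp add: one_pCons)

lemma act_Xpow_minus_1: "act ([:0,1:]^N - 1) h t = h (t + int N) - h t"
  by (simp add: act_diff act_one act_monom monom_altdef[of 1 N, simplified, symmetric])

lemma nilpotent_periodic:
  fixes h :: "int \<Rightarrow> int"
  assumes p: "prime p" and per: "\<And>t. h (t + int (p^a)) = h t"
  shows "int p ^ k dvd (dlt ^^ (p^a * k)) h t"
proof -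
  obtain A C where AC: "([:0,1:] - 1)^(p^a * k) = ([:0,1:]^(p^a) - 1) * A + of_nat p ^ k * (C :: int poly)"
    using ring_nilp[OF p] by blast
  have AC': "[:-1,1:]^(p^a * k) = A * ([:0,1:]^(p^a) - 1) + smult (int p ^ k) C"
    using AC unfolding X_minus_1 by (simp add: of_nat_poly mult.commute const_poly_power)
  have "(dlt ^^ (p^a * k)) h t = act (A * ([:0,1:]^(p^a) - 1) + smult (int p ^ k) C) h t"
    by (simp add: act_dlt_power[symmetric] AC')
  also have "\<dots> = act (A * ([:0,1:]^(p^a) - 1)) h t + act (smult (int p ^ k) C) h t"
    by (simp add: act_add)
  also have "act (A * ([:0,1:]^(p^a) - 1)) h t = 0"
    unfolding act_mult by (rule act_fun_zero) (simp only: act_Xpow_minus_1 per diff_self)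
  also have "act (smult (int p ^ k) C) h t = int p ^ k * act C h t"
    by (simp add: act_smult)
  finally show ?thesis by simp
qed

lemma indicator_polyfract:
  assumes p: "prime p"
  shows "\<exists>c. \<forall>x. int p ^ k dvd ((if x mod int (p^a) = u mod int (p^a) then 1 else 0)
             - (\<Sum>d<p^a*k. c d * ibinom x d))"
proof -
  define h :: "int \<Rightarrow> int" where "h x = (if x mod int (p^a) = u mod int (p^a) then 1 else 0)" for x
  have per: "h (t + int (p^a)) = h t" for t by (simp add: h_def)
  have "\<forall>x. int p ^ k dvd (h x - (\<Sum>d<p^a*k. (dlt ^^ d) h 0 * ibinom x d))"
    using newton_mod[of "int p ^ k" "p^a*k" h, OF nilpotent_periodic[where h=h, OF p per]] by blast
  hence "\<exists>c. \<forall>x. int p ^ k dvd (h x - (\<Sum>d<p^a*k. c d * ibinom x d))" by (intro exI[of _ "\<lambda>d. (dlt ^^ d) h 0"])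
  thus ?thesis unfolding h_def .
qed




definition pf :: "nat \<Rightarrow> ((nat \<Rightarrow> int) \<Rightarrow> 'b::ab_group_add) \<Rightarrow> bool" where
  "pf n g \<longleftrightarrow> (\<exists>D c. finite D \<and> (\<forall>x. polyfract_eval n D c x = g x))"

lemma pf_zero: "pf n (\<lambda>x. 0)"
  unfolding pf_def polyfract_eval_def by (rule exI[of _ "{}"]) simp

lemma pf_add:
  fixes g1 g2 :: "(nat \<Rightarrow> int) \<Rightarrow> 'b::ab_group_add"
  assumes "pf n g1" "pf n g2" shows "pf n (\<lambda>x. g1 x + g2 x)"
proof -
  obtain D1 c1 where 1: "finite D1" "\<And>x. polyfract_eval n D1 c1 x = g1 x" using assms(1) unfolding pf_def by blast
  obtain D2 c2 where 2: "finite D2" "\<And>x. polyfract_eval n D2 c2 x = g2 x" using assms(2) unfolding pf_def by blast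
  define c where "c \<delta> = (if \<delta> \<in> D1 then c1 \<delta> else 0) + (if \<delta> \<in> D2 then c2 \<delta> else 0)" for \<delta>
  have r: "(\<Sum>\<delta>\<in>D1 \<union> D2. zsmul (w \<delta>) (if \<delta> \<in> Di then ci \<delta> else 0)) = (\<Sum>\<delta>\<in>Di. zsmul (w \<delta>) (ci \<delta>))"
    if "Di \<subseteq> D1 \<union> D2" for Di and ci :: "_ \<Rightarrow> 'b" and w
  proof -
    have "(\<Sum>\<delta>\<in>D1 \<union> D2. zsmul (w \<delta>) (if \<delta> \<in> Di then ci \<delta> else 0)) = (\<Sum>\<delta>\<in>D1 \<union> D2. if \<delta> \<in> Di then zsmul (w \<delta>) (ci \<delta>) else 0)"
      by (rule sum.cong) auto
    also have "\<dots> = (\<Sum>\<delta>\<in>(D1 \<union> D2) \<inter> Di. zsmul (w \<delta>) (ci \<delta>))"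
      using 1 2 by (simp add: sum.inter_restrict)
    also have "(D1 \<union> D2) \<inter> Di = Di" using that by blast
    finally show ?thesis .
  qed
  have "polyfract_eval n (D1 \<union> D2) c x = g1 x + g2 x" for x
    unfolding polyfract_eval_def c_def zsmul_plus sum.distrib
    using r[of D1 _ c1] r[of D2 _ c2] 1(2)[of x, unfolded polyfract_eval_def] 2(2)[of x, unfolded polyfract_eval_def]
    by simp
  thus ?thesis unfolding pf_def using 1 2 by blast
qed

lemma pf_sum:
  assumes "finite I" "\<And>i. i \<in> I \<Longrightarrow> pf n (g i)"
  shows "pf n (\<lambda>x. \<Sum>i\<in>I. g i x)"
  using assms
proof (induction I rule: finite_induct)
  case empty thus ?case by (simp add: pf_zero)
next
  case (insert i I) thus ?case by (simp add: pf_add)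
qed

lemma dvd_prod_diff:
  fixes f g :: "'i \<Rightarrow> int"
  assumes "finite A" "\<And>i. i \<in> A \<Longrightarrow> m dvd (f i - g i)"
  shows "m dvd (prod f A - prod g A)"
  using assms
proof (induction A rule: finite_induct)
  case empty thus ?case by simp
next
  case (insert i A)
  have "prod f (insert i A) - prod g (insert i A) = (f i - g i) * prod f A + g i * (prod f A - prod g A)"
    using insert by (simp add: algebra_simps)
  thus ?case using insert by simp
qed

lemma zsmul_cong:
  assumes "zsmul m b = 0" "m dvd (X - Y)"
  shows "zsmul X b = zsmul Y (b :: 'b::ab_group_add)"
  using zsmul_dvd[OF assms] by (simp add: zsmul_diff)

lemma pf_point:
  fixes b :: "'b::ab_group_add"
  assumes p: "prime p" and b: "zsmul (int p ^ k) b = 0"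
  shows "pf n (\<lambda>x. if (\<forall>j<n. x j mod int (p^a) = u j mod int (p^a)) then b else 0)"
proof -
  define M where "M = p^a*k"
  define ind where "ind j y = (if y mod int (p^a) = u j mod int (p^a) then 1 else (0::int))" for j y
  have "\<exists>c. \<forall>y. int p ^ k dvd (ind j y - (\<Sum>d<M. c d * ibinom y d))" for j
    unfolding ind_def M_def by (rule indicator_polyfract[OF p])
  then obtain cc where cc: "\<And>j y. int p ^ k dvd (ind j y - (\<Sum>d<M. cc j d * ibinom y d))"
    by metis
  define D where "D = PiE {..<n} (\<lambda>_. {..<M})"
  define c where "c \<delta> = zsmul (\<Prod>j<n. cc j (\<delta> j)) b" for \<delta>
  have "polyfract_eval n D c x = (if (\<forall>j<n. x j mod int (p^a) = u j mod int (p^a)) then b else 0)" for x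
  proof -
    have "polyfract_eval n D c x = zsmul (\<Sum>\<delta>\<in>D. \<Prod>j<n. cc j (\<delta> j) * ibinom (x j) (\<delta> j)) b"
      unfolding polyfract_eval_def c_def sum_zsmul zsmul_mult[symmetric] prod.distrib
      by (simp add: mult.commute)
    also have "(\<Sum>\<delta>\<in>D. \<Prod>j<n. cc j (\<delta> j) * ibinom (x j) (\<delta> j)) = (\<Prod>j<n. \<Sum>d<M. cc j d * ibinom (x j) d)"
      unfolding D_def by (rule prod_sum_PiE[symmetric]) auto
    also have "zsmul (\<Prod>j<n. \<Sum>d<M. cc j d * ibinom (x j) d) b = zsmul (\<Prod>j<n. ind j (x j)) b"
      by (rule zsmul_cong[OF b]) (rule dvd_prod_diff, simp, metis cc dvd_minus_iff minus_diff_eq)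
    also have "(\<Prod>j<n. ind j (x j)) = (if (\<forall>j<n. x j mod int (p^a) = u j mod int (p^a)) then 1 else 0)"
    proof (cases "\<forall>j<n. x j mod int (p^a) = u j mod int (p^a)")
      case True thus ?thesis by (simp add: ind_def)
    next
      case False
      then obtain j where "j < n" "x j mod int (p^a) \<noteq> u j mod int (p^a)" by blast
      hence z: "(\<Prod>j<n. ind j (x j)) = 0" by (intro prod_zero) (auto simp: ind_def)
      show ?thesis unfolding z using False by simp
    qed
    finally show ?thesis by auto
  qed
  moreover have "finite D" unfolding D_def by (rule finite_PiE) auto
  ultimately show ?thesis unfolding pf_def by blast
qed

lemma finite_Zq: "finite (Zq q n)"
proof -
  have "Zq q n \<subseteq> (\<lambda>f j. if j < n then f j else 0) ` PiE {..<n} (\<lambda>j. {0..<q j})"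
  proof
    fix u assume u: "u \<in> Zq q n"
    show "u \<in> (\<lambda>f j. if j < n then f j else 0) ` PiE {..<n} (\<lambda>j. {0..<q j})"
      by (rule image_eqI[of _ _ "restrict u {..<n}"]) (use u in \<open>auto simp: Zq_def\<close>)
  qed
  moreover have "finite (PiE {..<n} (\<lambda>j. {0..<q j}))" by (rule finite_PiE) auto
  ultimately show ?thesis by (meson finite_surj)
qed

lemma pf_periodic:
  fixes g :: "(nat \<Rightarrow> int) \<Rightarrow> 'b::ab_group_add"
  assumes p: "prime p" and kill: "\<And>x. zsmul (int p ^ k) (g x) = 0"
    and per: "\<And>x y. (\<forall>j<n. x j mod int (p^a) = y j mod int (p^a)) \<Longrightarrow> g x = g y"
  shows "pf n g"
proof -
  define N where "N = int (p^a)"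
  have N0: "N > 0" using p by (simp add: N_def prime_gt_0_nat)
  define U where "U = Zq (\<lambda>_. N) n"
  have "pf n (\<lambda>x. \<Sum>u\<in>U. if (\<forall>j<n. x j mod int (p^a) = u j mod int (p^a)) then g u else 0)"
  proof (rule pf_sum)
    show "finite U" by (simp add: U_def finite_Zq)
    fix u assume "u \<in> U"
    show "pf n (\<lambda>x. if (\<forall>j<n. x j mod int (p^a) = u j mod int (p^a)) then g u else 0)"
      by (rule pf_point[OF p kill])
  qed
  moreover have "(\<Sum>u\<in>U. if (\<forall>j<n. x j mod int (p^a) = u j mod int (p^a)) then g u else 0) = g x" for x
  proof -
    define u0 where "u0 j = (if j < n then x j mod N else 0)" for j
    have u0U: "u0 \<in> U" using N0 by (auto simp: U_def Zq_def u0_def)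
    have iff: "(\<forall>j<n. x j mod N = u j mod N) \<longleftrightarrow> u = u0" if "u \<in> U" for u
    proof
      assume H: "\<forall>j<n. x j mod N = u j mod N"
      show "u = u0"
      proof
        fix j show "u j = u0 j" using H that by (cases "j < n") (auto simp: U_def Zq_def u0_def)
      qed
    next
      assume "u = u0" thus "\<forall>j<n. x j mod N = u j mod N" by (simp add: u0_def)
    qed
    have "(\<Sum>u\<in>U. if (\<forall>j<n. x j mod N = u j mod N) then g u else 0) = (\<Sum>u\<in>U. if u = u0 then g u else 0)"
      by (rule sum.cong) (auto simp: iff)
    also have "\<dots> = g u0" using u0U by (simp add: U_def finite_Zq)
    also have "g u0 = g x" by (rule per) (simp add: u0_def N_def)
    finally show ?thesis by (simp add: N_def)
  qed
  ultimately show ?thesis by simp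
qed




lemma act_sum_fun: "act P (\<lambda>t. \<Sum>i\<in>I. f i t) t = (\<Sum>i\<in>I. act P (f i) t)"
  unfolding act_def zsmul_sum by (rule sum.swap)

lemma dlt_pow_sum: "(dlt ^^ M) (\<lambda>t. \<Sum>i\<in>I. f i t) t = (\<Sum>i\<in>I. (dlt ^^ M) (f i) t)"
  by (simp add: act_dlt_power[symmetric] act_sum_fun)

lemma dlt_pow_zero: "(dlt ^^ k) (\<lambda>t. 0::'b::ab_group_add) = (\<lambda>t. 0)"
  by (induction k) (simp_all add: dlt_def[abs_def])

lemma dlt_binom_kill:
  fixes c :: "'b::ab_group_add"
  shows "d < k \<Longrightarrow> (dlt ^^ k) (\<lambda>t. zsmul (ibinom (y + t) d * K) c) = (\<lambda>t. 0)"
proof (induction k arbitrary: d)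
  case 0 thus ?case by simp
next
  case (Suc k)
  have e: "(dlt ^^ Suc k) h = (dlt ^^ k) (dlt h)" for h :: "int \<Rightarrow> 'b" by (simp only: funpow_Suc_right o_apply)
  show ?case
  proof (cases d)
    case 0
    have "dlt (\<lambda>t. zsmul (ibinom (y + t) d * K) c) = (\<lambda>t. 0)" by (rule ext) (simp add: dlt_def 0)
    thus ?thesis by (simp only: e dlt_pow_zero)
  next
    case (Suc d')
    have "dlt (\<lambda>t. zsmul (ibinom (y + t) d * K) c) = (\<lambda>t. zsmul (ibinom (y + t) d' * K) c)"
    proof (rule ext)
      fix t
      have "ibinom (y + (t+1)) d = ibinom (y + t) d' + ibinom (y+t) d"
        using ibinom_Suc_Suc[of "y+t" d'] by (simp add: Suc add.assoc)
      thus "dlt (\<lambda>t. zsmul (ibinom (y + t) d * K) c) t = zsmul (ibinom (y + t) d' * K) c"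
        by (simp add: dlt_def zsmul_diff[symmetric] algebra_simps)
    qed
    moreover have "d' < k" using Suc.prems \<open>d = Suc d'\<close> by simp
    ultimately show ?thesis using Suc.IH[of d'] by (simp only: e)
  qed
qed

lemma pf_line_nil:
  fixes c :: "(nat \<Rightarrow> nat) \<Rightarrow> 'b::ab_group_add"
  assumes D: "finite D" and j: "j < n"
  shows "\<exists>M. \<forall>t. (dlt ^^ M) (\<lambda>t. polyfract_eval n D c (x(j := x j + t))) t = 0"
proof -
  define M where "M = Suc (\<Sum>\<delta>\<in>D. \<delta> j)"
  define K where "K \<delta> = (\<Prod>i\<in>{..<n} - {j}. ibinom (x i) (\<delta> i))" for \<delta>
  have eq: "polyfract_eval n D c (x(j := x j + t)) = (\<Sum>\<delta>\<in>D. zsmul (ibinom (x j + t) (\<delta> j) * K \<delta>) (c \<delta>))" for t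
  proof -
    have "(\<Prod>i<n. ibinom ((x(j := x j + t)) i) (\<delta> i)) = ibinom (x j + t) (\<delta> j) * K \<delta>" for \<delta>
    proof -
      have "(\<Prod>i<n. ibinom ((x(j := x j + t)) i) (\<delta> i)) = ibinom ((x(j := x j + t)) j) (\<delta> j) * (\<Prod>i\<in>{..<n} - {j}. ibinom ((x(j := x j + t)) i) (\<delta> i))"
        using j by (subst prod.remove[of _ j]) auto
      also have "(\<Prod>i\<in>{..<n} - {j}. ibinom ((x(j := x j + t)) i) (\<delta> i)) = K \<delta>"
        unfolding K_def by (rule prod.cong) auto
      finally show ?thesis by simp
    qed
    thus ?thesis unfolding polyfract_eval_def by simp
  qed
  have "(dlt ^^ M) (\<lambda>t. polyfract_eval n D c (x(j := x j + t))) t = 0" for t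
  proof -
    have "(dlt ^^ M) (\<lambda>t. polyfract_eval n D c (x(j := x j + t))) t
        = (\<Sum>\<delta>\<in>D. (dlt ^^ M) (\<lambda>t. zsmul (ibinom (x j + t) (\<delta> j) * K \<delta>) (c \<delta>)) t)"
      unfolding eq by (rule dlt_pow_sum)
    also have "\<dots> = 0"
    proof (rule sum.neutral, rule ballI)
      fix \<delta> assume "\<delta> \<in> D"
      hence "\<delta> j < M" unfolding M_def using D by (intro le_imp_less_Suc member_le_sum) auto
      thus "(dlt ^^ M) (\<lambda>t. zsmul (ibinom (x j + t) (\<delta> j) * K \<delta>) (c \<delta>)) t = 0"
        by (simp add: dlt_binom_kill)
    qed
    finally show ?thesis .
  qed
  thus ?thesis by blast
qed

lemma periodic_mult:
  assumes "\<And>t. H (t + N) = H t"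
  shows "H (t + N * (s::int)) = H (t::int)"
proof (induction s rule: int_induct[where k=0])
  case base thus ?case by simp
next
  case (step1 i) thus ?case using assms[of "t + N * i"] by (simp add: algebra_simps)
next
  case (step2 i) thus ?case using assms[of "t + N * (i - 1)"] by (simp add: algebra_simps)
qed

lemma one_dim_core:
  fixes H :: "int \<Rightarrow> 'b::ab_group_add"
  assumes per: "\<And>t. H (t + int N * int r) = H t"
    and nil: "\<And>t. (dlt ^^ M) H t = 0"
    and kill: "\<And>t. zsmul P (H t) = 0"
    and cop: "coprime (int r) P"
  shows "H (t + int N) = H t"
proof -
  define u :: "int poly" where "u = [:0,1:]^N"
  obtain A B where AB: "of_nat r ^ M * (u - 1) = (u^r - 1) * A + (u - 1)^(Suc M) * B"
    using ring_r_identity by blast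
  have "u - 1 = ([:0,1:] - 1) * (\<Sum>i<N. [:0,1:]^i)" unfolding u_def by (rule power_diff_1_eq)
  then obtain G where G: "u - 1 = [:-1,1:] * G" unfolding X_minus_1 by blast
  have ur: "u^r = [:0,1:]^(N*r)" by (simp add: u_def power_mult)
  have e1: "smult (int r ^ M) (u - 1) = of_nat r ^ M * (u - 1)"
    by (simp add: of_nat_poly const_poly_power)
  have e2: "(u-1)^(Suc M) * B = (G^(Suc M) * [:-1,1:] * B) * [:-1,1:]^M"
    unfolding G by (simp only: power_mult_distrib power_Suc mult_ac)
  have e3: "(u^r - 1) * A = A * ([:0,1:]^(N*r) - 1)" by (simp only: ur mult.commute)
  have eq: "smult (int r ^ M) (u - 1) = A * ([:0,1:]^(N*r) - 1) + (G^(Suc M) * [:-1,1:] * B) * [:-1,1:]^M"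
    unfolding e1 AB e2 e3 ..
  have "zsmul (int r ^ M) (H (t + int N) - H t) = act (smult (int r ^ M) (u - 1)) H t"
    by (simp add: act_smult u_def act_Xpow_minus_1)
  also have "\<dots> = 0"
    unfolding eq act_add act_mult
    by (simp add: act_fun_zero act_Xpow_minus_1 act_dlt_power nil per)
  finally have z1: "zsmul (int r ^ M) (H (t + int N) - H t) = 0" .
  have z2: "zsmul P (H (t + int N) - H t) = 0" by (simp add: zsmul_minus kill)
  have "coprime (int r ^ M) P" using cop by simp
  hence "gcd (int r ^ M) P = 1" by simp
  with zsmul_gcd[OF z1 z2] show ?thesis by simp
qed




definition PP :: "nat \<Rightarrow> nat \<Rightarrow> nat" where "PP E p = p ^ multiplicity p E"
definition mm :: "nat \<Rightarrow> nat \<Rightarrow> nat" where "mm E p = E div PP E p"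
definition eps :: "nat \<Rightarrow> nat \<Rightarrow> int" where
  "eps E p = (SOME e. int (PP E p) dvd (e - 1) \<and> int (mm E p) dvd e)"

lemma E_split: "E = PP E p * mm E p"
  unfolding PP_def mm_def using multiplicity_dvd[of p E] by simp

lemma mm_ndvd: "E > 0 \<Longrightarrow> prime p \<Longrightarrow> \<not> p dvd mm E p"
  unfolding PP_def mm_def by (rule multiplicity_decompose) auto

lemma coprime_PP_mm: "E > 0 \<Longrightarrow> prime p \<Longrightarrow> coprime (PP E p) (mm E p)"
  unfolding PP_def using mm_ndvd[of E p] prime_imp_power_coprime[of p "mm E p"]
  by (simp add: coprime_commute)

lemma eps_props:
  assumes "E > 0" "prime p"
  shows "int (PP E p) dvd (eps E p - 1) \<and> int (mm E p) dvd eps E p"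
proof -
  have "coprime (int (PP E p)) (int (mm E p))" using coprime_PP_mm[OF assms] by simp
  hence "gcd (int (PP E p)) (int (mm E p)) = 1" by simp
  then obtain u v where uv: "u * int (PP E p) + v * int (mm E p) = 1" using bezout_int by metis
  have "int (PP E p) dvd (v * int (mm E p) - 1) \<and> int (mm E p) dvd (v * int (mm E p))"
  proof
    have "v * int (mm E p) - 1 = int (PP E p) * (- u)" using uv by (simp add: algebra_simps)
    thus "int (PP E p) dvd (v * int (mm E p) - 1)" by simp
  qed simp
  thus ?thesis unfolding eps_def by (rule someI)
qed

lemma PP_dvd_mm:
  assumes "E > 0" "prime p" "prime p'" "p \<noteq> p'"
  shows "PP E p' dvd mm E p"
proof -
  have "PP E p' dvd PP E p * mm E p" using multiplicity_dvd[of p' E] E_split[of E p] by (simp add: PP_def)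
  moreover have "coprime (PP E p') (PP E p)"
    unfolding PP_def using primes_coprime[OF assms(3,2)] assms(4) by simp
  ultimately show ?thesis by (simp add: coprime_dvd_mult_right_iff)
qed

context
  fixes E :: nat
  assumes E0: "E > 0"
begin

lemma primary_kill:
  fixes x :: "'g::ab_group_add"
  assumes kE: "zsmul (int E) x = 0" and p: "prime p" and x: "x \<in> primary p"
  shows "zsmul (int (PP E p)) x = 0"
proof -
  obtain k where k: "zsmul (int (p ^ k)) x = 0" using x unfolding primary_def by blast
  have "gcd (p^k) E dvd PP E p"
  proof -
    have "coprime (p^k) (mm E p)" using mm_ndvd[OF E0 p] p by (simp add: prime_imp_coprime)
    hence "coprime (gcd (p^k) E) (mm E p)" by (rule coprime_imp_coprime) auto
    moreover have "gcd (p^k) E dvd PP E p * mm E p" using E_split[of E p] by (metis gcd_dvd2)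
    ultimately show ?thesis by (simp add: coprime_dvd_mult_left_iff)
  qed
  hence "int (gcd (p^k) E) dvd int (PP E p)" by simp
  moreover have "zsmul (int (gcd (p^k) E)) x = 0" using zsmul_gcd[OF k kE] by (simp only: gcd_int_int_eq)
  ultimately show ?thesis using zsmul_dvd by blast
qed

lemma eps_primary: "prime p \<Longrightarrow> zsmul (int E) (x::'g::ab_group_add) = 0 \<Longrightarrow> zsmul (int (PP E p)) (zsmul (eps E p) x) = 0"
proof -
  assume p: "prime p" and kx: "zsmul (int E) x = 0"
  obtain t where t: "eps E p = int (mm E p) * t" using eps_props[OF E0 p] by (auto elim!: dvdE)
  have e: "int (PP E p) * eps E p = t * int E" unfolding t using E_split[of E p]
    by (metis mult.assoc mult.commute of_nat_mult)
  have "zsmul (int (PP E p)) (zsmul (eps E p) x) = zsmul (int (PP E p) * eps E p) x" by (simp add: zsmul_mult)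
  also have "\<dots> = zsmul t (zsmul (int E) x)" unfolding e by (simp add: zsmul_mult)
  finally show ?thesis using kx by simp
qed

lemma eps_in_primary: "prime p \<Longrightarrow> zsmul (int E) (x::'g::ab_group_add) = 0 \<Longrightarrow> zsmul (eps E p) x \<in> primary p"
  unfolding primary_def using eps_primary[of p x] by (auto simp: PP_def)

lemma eps_fix: "prime p \<Longrightarrow> zsmul (int E) (x::'g::ab_group_add) = 0 \<Longrightarrow> x \<in> primary p \<Longrightarrow> zsmul (eps E p) x = x"
  using eps_props[OF E0, of p] primary_kill[of x p] zsmul_dvd[of "int (PP E p)" x "eps E p - 1"]
  by (simp add: zsmul_diff)

lemma eps_other: "prime p \<Longrightarrow> prime p' \<Longrightarrow> p \<noteq> p' \<Longrightarrow> zsmul (int E) (x::'g::ab_group_add) = 0 \<Longrightarrow> x \<in> primary p'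
   \<Longrightarrow> zsmul (eps E p) x = 0"
proof -
  assume a: "prime p" "prime p'" "p \<noteq> p'" "zsmul (int E) x = 0" "x \<in> primary p'"
  have "zsmul (int (PP E p')) x = 0" using primary_kill[OF a(4,2,5)] .
  moreover have "int (PP E p') dvd eps E p"
    using eps_props[OF E0 a(1)] PP_dvd_mm[OF E0 a(1,2,3)] by (meson dvd_trans int_dvd_int_iff)
  ultimately show ?thesis by (rule zsmul_dvd)
qed

lemma zsmul_Gcd: "finite X \<Longrightarrow> (\<And>y. y \<in> X \<Longrightarrow> zsmul y c = 0) \<Longrightarrow> zsmul (Gcd X) (c::'g::ab_group_add) = 0"
proof (induction X rule: finite_induct)
  case empty thus ?case by simp
next
  case (insert a X) thus ?case by (simp add: zsmul_gcd)
qed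

lemma decomp:
  fixes x :: "'g::ab_group_add"
  assumes kE: "\<And>y::'g. zsmul (int E) y = 0"
  shows "x = (\<Sum>p\<in>{p. prime p \<and> p dvd E}. zsmul (eps E p) x)"
proof -
  define S where "S = {p. prime p \<and> p dvd E}"
  have finS: "finite S" unfolding S_def using E0 by (auto intro: finite_subset[of _ "{..E}"] dest: dvd_imp_le)
  define c where "c = x - (\<Sum>p\<in>S. zsmul (eps E p) x)"
  have cp: "zsmul (eps E p) c = 0" if "p \<in> S" for p
  proof -
    have p: "prime p" using that by (simp add: S_def)
    have "zsmul (eps E p) (\<Sum>p'\<in>S. zsmul (eps E p') x) = (\<Sum>p'\<in>S. zsmul (eps E p) (zsmul (eps E p') x))"
      by (rule zsmul_sum)
    also have "\<dots> = zsmul (eps E p) (zsmul (eps E p) x) + (\<Sum>p'\<in>S - {p}. zsmul (eps E p) (zsmul (eps E p') x))"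
      using finS that by (rule sum.remove)
    also have "(\<Sum>p'\<in>S - {p}. zsmul (eps E p) (zsmul (eps E p') x)) = 0"
    proof (rule sum.neutral, rule ballI)
      fix p' assume "p' \<in> S - {p}"
      hence p': "prime p'" "p' \<noteq> p" by (auto simp: S_def)
      show "zsmul (eps E p) (zsmul (eps E p') x) = 0"
        using p'(2) by (intro eps_other[OF p p'(1)] kE eps_in_primary[OF p'(1) kE]) auto
    qed
    also have "zsmul (eps E p) (zsmul (eps E p) x) = zsmul (eps E p) x"
      by (rule eps_fix[OF p kE eps_in_primary[OF p kE]])
    finally show ?thesis unfolding c_def by (simp add: zsmul_minus)
  qed
  define X where "X = insert (int E) (eps E ` S)"
  have "zsmul (Gcd X) c = 0"
  proof (rule zsmul_Gcd)
    show "finite X" using finS by (simp add: X_def)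
    fix y assume "y \<in> X"
    thus "zsmul y c = 0" unfolding X_def using kE cp by auto
  qed
  moreover have "Gcd X = 1"
  proof -
    define d where "d = Gcd X"
    have dE: "d dvd int E" unfolding d_def X_def by simp
    have d0: "d \<noteq> 0" using dE E0 by auto
    have "is_unit d"
    proof (rule ccontr)
      assume "\<not> is_unit d"
      then obtain b where b: "b dvd d" "prime b" using prime_divisor_exists[OF d0] by blast
      have b0: "b > 0" using prime_gt_0_int[OF b(2)] .
      define q where "q = nat b"
      have bq: "b = int q" using b0 by (simp add: q_def)
      have q: "prime q" using b(2) bq by simp
      have "q dvd E" using dvd_trans[OF b(1) dE] bq by simp
      hence qS: "q \<in> S" using q by (simp add: S_def)
      have de: "d dvd eps E q" unfolding d_def by (rule Gcd_dvd) (simp add: X_def qS)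
      have b1: "b dvd eps E q" using b(1) de by (rule dvd_trans)
      have "q dvd PP E q"
      proof -
        have "multiplicity q E > 0" using \<open>q dvd E\<close> E0 q
          by (subst multiplicity_gt_zero_iff) auto
        hence "1 \<le> multiplicity q E" by simp
        thus ?thesis unfolding PP_def using dvd_power[of "multiplicity q E" q] by simp
      qed
      hence bP: "b dvd int (PP E q)" using bq by simp
      have "int (PP E q) dvd eps E q - 1" using eps_props[OF E0 q] by blast
      with bP have "b dvd eps E q - 1" by (rule dvd_trans)
      with b1 have "b dvd eps E q - (eps E q - 1)" by (rule dvd_diff)
      hence "b dvd 1" by simp
      thus False using b(2) not_prime_unit by blast
    qed
    moreover have "d \<ge> 0" unfolding d_def by simp
    ultimately have "d = 1" by (simp add: abs_if split: if_splits)
    thus ?thesis unfolding d_def .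
  qed
  ultimately have "c = 0" by simp
  hence "x = (\<Sum>p\<in>S. zsmul (eps E p) x)" unfolding c_def by simp
  thus ?thesis unfolding S_def .
qed

end



lemma one_dim:
  fixes H :: "int \<Rightarrow> 'b::ab_group_add"
  assumes p: "prime p" and Q: "Q > 0"
    and per: "\<And>t. H (t + Q) = H t"
    and nil: "\<And>t. (dlt ^^ M) H t = 0"
    and kill: "\<And>t. zsmul (int p ^ v) (H t) = 0"
    and cop: "coprime (int m) (int p)"
    and dv: "Q dvd int m * s"
  shows "H s = H 0"
proof -
  have pi: "prime (int p)" using p by simp
  have Q0: "Q \<noteq> 0" and nu: "\<not> is_unit (int p)" using Q pi not_prime_unit by auto
  obtain r where r: "Q = int p ^ multiplicity (int p) Q * r" "\<not> int p dvd r"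
    by (rule multiplicity_decompose'[where x=Q and p="int p"]) (use Q0 nu in auto)
  define N where "N = p ^ multiplicity (int p) Q"
  have QN: "Q = int N * r" using r(1) by (simp add: N_def)
  have N0: "int N > 0" unfolding N_def using prime_gt_0_nat[OF p] by simp
  have r0: "r > 0" using Q QN N0 by (simp add: zero_less_mult_iff)
  have core: "H (t + int N) = H t" for t
  proof (rule one_dim_core[where r="nat r" and M=M and P="int p ^ v"])
    show "H (t + int N * int (nat r)) = H t" for t using per[of t] QN r0 by simp
    show "(dlt ^^ M) H t = 0" for t by (rule nil)
    show "zsmul (int p ^ v) (H t) = 0" for t by (rule kill)
    have "coprime (int p) r" using prime_imp_coprime[OF pi r(2)] .
    thus "coprime (int (nat r)) (int p ^ v)" using r0 by (simp add: coprime_commute)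
  qed
  have "coprime (int N) (int m)" using cop by (simp add: N_def coprime_commute)
  moreover have "int N dvd int m * s" using dv unfolding QN by (rule dvd_mult_left)
  ultimately have "int N dvd s" using coprime_dvd_mult_right_iff[of "int N" "int m" s] by blast
  then obtain s' where "s = int N * s'" by (elim dvdE)
  thus ?thesis using periodic_mult[of H "int N" 0 s', OF core] by simp
qed

context
  fixes q :: "nat \<Rightarrow> int" and n :: nat and \<psi> :: "(nat \<Rightarrow> int) \<Rightarrow> 'a::ab_group_add"
  assumes cyc: "cyc_iso q n \<psi>"
begin

lemma qpos: "j < n \<Longrightarrow> q j > 0" using cyc unfolding cyc_iso_def by blast

lemma redq_Zq: "redq q n x \<in> Zq q n"
  using qpos unfolding redq_def Zq_def by auto

lemma redq_idem: "u \<in> Zq q n \<Longrightarrow> redq q n u = u"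
  unfolding redq_def Zq_def by (auto intro!: ext)

lemma redq_local: "(\<And>j. j < n \<Longrightarrow> x j mod q j = y j mod q j) \<Longrightarrow> redq q n x = redq q n y"
  unfolding redq_def by (auto intro!: ext)

lemma Phi_add: "\<psi> (redq q n (\<lambda>j. x j + y j)) = \<psi> (redq q n x) + \<psi> (redq q n y)"
proof -
  have "\<psi> (redq q n (\<lambda>j. redq q n x j + redq q n y j)) = \<psi> (redq q n x) + \<psi> (redq q n y)"
    using cyc redq_Zq unfolding cyc_iso_def by blast
  moreover have "redq q n (\<lambda>j. redq q n x j + redq q n y j) = redq q n (\<lambda>j. x j + y j)"
    by (rule redq_local) (simp add: redq_def mod_add_eq)
  ultimately show ?thesis by simp
qed

lemma Phi_zero: "\<psi> (redq q n (\<lambda>j. 0)) = 0"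
  using Phi_add[of "\<lambda>j. 0" "\<lambda>j. 0"] by simp

lemma Phi_smul: "\<psi> (redq q n (\<lambda>j. k * x j)) = zsmul k (\<psi> (redq q n x))"
proof (induction k rule: int_induct[where k=0])
  case base thus ?case by (simp add: Phi_zero)
next
  case (step1 i)
  have "\<psi> (redq q n (\<lambda>j. (i+1) * x j)) = \<psi> (redq q n (\<lambda>j. i * x j + x j))" by (simp add: algebra_simps)
  thus ?case using step1 by (simp add: Phi_add zsmul_add)
next
  case (step2 i)
  have "\<psi> (redq q n (\<lambda>j. i * x j)) = \<psi> (redq q n (\<lambda>j. (i - 1) * x j + x j))" by (simp add: algebra_simps)
  hence "\<psi> (redq q n (\<lambda>j. (i - 1) * x j)) = \<psi> (redq q n (\<lambda>j. i * x j)) - \<psi> (redq q n x)"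
    by (simp add: Phi_add)
  thus ?case using step2 by (simp add: zsmul_diff)
qed

lemma Phi_surj: "\<exists>u. \<psi> (redq q n u) = a"
proof -
  have "a \<in> \<psi> ` Zq q n" using cyc unfolding cyc_iso_def bij_betw_def by blast
  then obtain u where "u \<in> Zq q n" "\<psi> u = a" by blast
  thus ?thesis using redq_idem[of u] by (intro exI[of _ u]) auto
qed

lemma Phi_kernel: "\<psi> (redq q n x) = 0 \<Longrightarrow> j < n \<Longrightarrow> q j dvd x j"
proof -
  assume z: "\<psi> (redq q n x) = 0" and j: "j < n"
  have "inj_on \<psi> (Zq q n)" using cyc unfolding cyc_iso_def bij_betw_def by blast
  moreover have "\<psi> (redq q n x) = \<psi> (redq q n (\<lambda>j. 0))" using z Phi_zero by simp
  ultimately have "redq q n x = redq q n (\<lambda>j. 0)" using redq_Zq by (meson inj_on_def)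
  hence "redq q n x j = redq q n (\<lambda>j. 0) j" by simp
  hence "x j mod q j = 0" using j by (simp add: redq_def)
  thus ?thesis by (simp add: mod_eq_0_iff_dvd)
qed

end




lemma zsmul_comm: "zsmul a (zsmul b x) = zsmul b (zsmul a (x::'b::ab_group_add))"
  by (metis zsmul_mult mult.commute)

lemma key:
  fixes f :: "'a::ab_group_add \<Rightarrow> 'b::ab_group_add" and \<psi> :: "(nat \<Rightarrow> int) \<Rightarrow> 'a"
  assumes cyc: "cyc_iso q n \<psi>" and D: "finite D"
    and rep: "\<And>x. polyfract_eval n D c x = f (\<psi> (redq q n x))"
    and E0: "E > 0" and p: "prime p" and kB: "\<And>b::'b. zsmul (int E) b = 0"
    and z: "zsmul (int (mm E p)) z = 0"
  shows "zsmul (eps E p) (f (y + z)) = zsmul (eps E p) (f y)"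
proof -
  obtain u where u: "\<psi> (redq q n u) = y" using Phi_surj[OF cyc] by blast
  obtain w where w: "\<psi> (redq q n w) = z" using Phi_surj[OF cyc] by blast
  have wdvd: "q j dvd int (mm E p) * w j" if "j < n" for j
  proof (rule Phi_kernel[OF cyc _ that])
    show "\<psi> (redq q n (\<lambda>j. int (mm E p) * w j)) = 0" using z w by (simp add: Phi_smul[OF cyc])
  qed
  define h where "h x = zsmul (eps E p) (f (\<psi> (redq q n x)))" for x
  define c' where "c' \<delta> = zsmul (eps E p) (c \<delta>)" for \<delta>
  have rep': "polyfract_eval n D c' x = h x" for x
    unfolding h_def rep[symmetric] polyfract_eval_def c'_def zsmul_sum
    by (simp add: zsmul_comm)
  have hloc: "h x = h x'" if "\<And>j. j < n \<Longrightarrow> x j mod q j = x' j mod q j" for x x'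
    unfolding h_def using redq_local[OF cyc that] by simp
  have step: "k \<le> n \<Longrightarrow> h (\<lambda>j. u j + (if j < k then w j else 0)) = h u" for k
  proof (induction k)
    case 0 thus ?case by simp
  next
    case (Suc k)
    hence kn: "k < n" by simp
    define x where "x = (\<lambda>j. u j + (if j < k then w j else 0))"
    have e: "(\<lambda>j. u j + (if j < Suc k then w j else 0)) = x(k := x k + w k)"
      by (rule ext) (simp add: x_def)
    define H where "H t = h (x(k := x k + t))" for t
    obtain M where M: "\<And>t. (dlt ^^ M) (\<lambda>t. polyfract_eval n D c' (x(k := x k + t))) t = 0"
      using pf_line_nil[OF D kn, of c' x] by blast
    have Heq: "H = (\<lambda>t. polyfract_eval n D c' (x(k := x k + t)))" by (rule ext) (simp add: H_def rep')
    have "H (w k) = H 0"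
    proof (rule one_dim[OF p])
      show "q k > 0" using qpos[OF cyc kn] .
      show "H (t + q k) = H t" for t unfolding H_def by (rule hloc) (auto simp flip: add.assoc)
      show "(dlt ^^ M) H t = 0" for t unfolding Heq by (rule M)
      show "zsmul (int p ^ multiplicity p E) (H t) = 0" for t
        using eps_primary[OF E0 p kB] by (simp add: H_def h_def PP_def)
      have "coprime p (mm E p)" using prime_imp_coprime[OF p mm_ndvd[OF E0 p]] .
      thus "coprime (int (mm E p)) (int p)" by (simp add: coprime_commute)
      show "q k dvd int (mm E p) * w k" by (rule wdvd[OF kn])
    qed
    moreover have "H 0 = h x" by (simp add: H_def)
    ultimately show ?case using Suc by (simp add: H_def e x_def)
  qed
  have "h (\<lambda>j. u j + w j) = h (\<lambda>j. u j + (if j < n then w j else 0))" by (rule hloc) simp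
  also have "\<dots> = h u" by (rule step) simp
  finally have "h (\<lambda>j. u j + w j) = h u" .
  moreover have "f (y + z) = f (\<psi> (redq q n (\<lambda>j. u j + w j)))" using u w by (simp add: Phi_add[OF cyc])
  ultimately show ?thesis using u by (simp add: h_def)
qed




theorem theorem3p17:
  fixes q :: "nat \<Rightarrow> int" and n :: nat and \<psi> :: "(nat \<Rightarrow> int) \<Rightarrow> 'a::{ab_group_add,finite}"
  assumes "cyc_iso q n \<psi>"
  shows "{f :: 'a \<Rightarrow> 'b::{ab_group_add,finite}. polyfractal q n \<psi> f} = primary_prod_maps"
proof -
  note cyc = assms
  define E where "E = card (UNIV::'a set) * card (UNIV::'b set)"
  have E0: "E > 0" unfolding E_def by (simp add: finite_UNIV_card_ge_0)
  have kA: "zsmul (int E) a = 0" for a :: 'a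
    by (rule zsmul_dvd[OF zsmul_card]) (simp add: E_def)
  have kB: "zsmul (int E) b = 0" for b :: 'b
    by (rule zsmul_dvd[OF zsmul_card]) (simp add: E_def)
  define S where "S = {p. prime p \<and> p dvd E}"
  have finS: "finite S" unfolding S_def using E0 by (auto intro: finite_subset[of _ "{..E}"] dest: dvd_imp_le)
  have PM: "primary_prod_maps = {f :: 'a \<Rightarrow> 'b. \<exists>F :: nat \<Rightarrow> 'a \<Rightarrow> 'b.
     (\<forall>p\<in>S. \<forall>a\<in>primary p. F p a \<in> primary p) \<and>
     (\<forall>a :: nat \<Rightarrow> 'a. (\<forall>p\<in>S. a p \<in> primary p) \<longrightarrow> f (\<Sum>p\<in>S. a p) = (\<Sum>p\<in>S. F p (a p)))}"
    unfolding primary_prod_maps_def Let_def S_def E_def ..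
  show ?thesis
  proof (rule set_eqI, rule iffI)
    fix f :: "'a \<Rightarrow> 'b"
    assume "f \<in> {f. polyfractal q n \<psi> f}"
    then obtain D c where D: "finite D" and rep: "\<And>x. polyfract_eval n D c x = f (\<psi> (redq q n x))"
      unfolding polyfractal_def by blast
    show "f \<in> primary_prod_maps" unfolding PM mem_Collect_eq
    proof (rule exI[of _ "\<lambda>p a. zsmul (eps E p) (f a)"], intro conjI allI impI ballI)
      fix p and a :: 'a assume "p \<in> S" "a \<in> primary p"
      hence p: "prime p" by (simp add: S_def)
      show "zsmul (eps E p) (f a) \<in> primary p" by (rule eps_in_primary[OF E0 p kB])
    next
      fix a :: "nat \<Rightarrow> 'a" assume H: "\<forall>p\<in>S. a p \<in> primary p"
      have "f (\<Sum>p\<in>S. a p) = (\<Sum>p\<in>S. zsmul (eps E p) (f (\<Sum>p\<in>S. a p)))"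
        unfolding S_def by (rule decomp[OF E0 kB])
      also have "\<dots> = (\<Sum>p\<in>S. zsmul (eps E p) (f (a p)))"
      proof (rule sum.cong[OF refl])
        fix p assume pS: "p \<in> S"
        hence p: "prime p" by (simp add: S_def)
        have sp: "(\<Sum>p\<in>S. a p) = a p + (\<Sum>p'\<in>S - {p}. a p')" using finS pS by (rule sum.remove)
        have "zsmul (int (mm E p)) (\<Sum>p'\<in>S - {p}. a p') = 0"
          unfolding zsmul_sum
        proof (rule sum.neutral, rule ballI)
          fix p' assume "p' \<in> S - {p}"
          hence p': "prime p'" "p' \<noteq> p" "p' \<in> S" by (auto simp: S_def)
          have "zsmul (int (PP E p')) (a p') = 0" using primary_kill[OF E0 kA p'(1)] H p'(3) by blast
          moreover have "int (PP E p') dvd int (mm E p)" using PP_dvd_mm[OF E0 p p'(1)] p'(2) by simp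
          ultimately show "zsmul (int (mm E p)) (a p') = 0" by (rule zsmul_dvd)
        qed
        from key[OF cyc D rep E0 p kB this, of "a p"]
        show "zsmul (eps E p) (f (\<Sum>p\<in>S. a p)) = zsmul (eps E p) (f (a p))" unfolding sp .
      qed
      finally show "f (\<Sum>p\<in>S. a p) = (\<Sum>p\<in>S. zsmul (eps E p) (f (a p)))" .
    qed
  next
    fix f :: "'a \<Rightarrow> 'b"
    assume "f \<in> primary_prod_maps"
    then obtain F :: "nat \<Rightarrow> 'a \<Rightarrow> 'b" where
      F1: "\<And>p a. p \<in> S \<Longrightarrow> a \<in> primary p \<Longrightarrow> F p a \<in> primary p" and
      F2: "\<And>a. (\<forall>p\<in>S. a p \<in> primary p) \<Longrightarrow> f (\<Sum>p\<in>S. a p) = (\<Sum>p\<in>S. F p (a p))"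
      unfolding PM by blast
    have fa: "f a = (\<Sum>p\<in>S. F p (zsmul (eps E p) a))" for a
    proof -
      have "a = (\<Sum>p\<in>S. zsmul (eps E p) a)" unfolding S_def by (rule decomp[OF E0 kA])
      hence "f a = f (\<Sum>p\<in>S. zsmul (eps E p) a)" by simp
      also have "\<dots> = (\<Sum>p\<in>S. F p (zsmul (eps E p) a))"
        by (rule F2) (auto simp: S_def intro: eps_in_primary[OF E0 _ kA])
      finally show ?thesis .
    qed
    have "pf n (\<lambda>x. \<Sum>p\<in>S. F p (zsmul (eps E p) (\<psi> (redq q n x))))"
    proof (rule pf_sum[OF finS])
      fix p assume pS: "p \<in> S"
      hence p: "prime p" by (simp add: S_def)
      define m where "m = multiplicity p E"
      show "pf n (\<lambda>x. F p (zsmul (eps E p) (\<psi> (redq q n x))))"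
      proof (rule pf_periodic[OF p, where k=m and a=m])
        fix x
        have "F p (zsmul (eps E p) (\<psi> (redq q n x))) \<in> primary p"
          by (rule F1[OF pS eps_in_primary[OF E0 p kA]])
        from primary_kill[OF E0 kB p this]
        show "zsmul (int p ^ m) (F p (zsmul (eps E p) (\<psi> (redq q n x)))) = 0"
          by (simp add: PP_def m_def)
      next
        fix x y :: "nat \<Rightarrow> int"
        assume xy: "\<forall>j<n. x j mod int (p ^ m) = y j mod int (p ^ m)"
        define N where "N = int (p ^ m)"
        define w where "w j = (y j - x j) div N" for j
        have yj: "y j = x j + N * w j" if "j < n" for j
        proof -
          have "N dvd x j - y j" using xy that by (simp add: N_def mod_eq_dvd_iff)
          hence "N dvd y j - x j" by (simp add: dvd_diff_commute)
          thus ?thesis by (simp add: w_def)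
        qed
        have "\<psi> (redq q n y) = \<psi> (redq q n (\<lambda>j. x j + N * w j))"
          using redq_local[OF cyc, of y "\<lambda>j. x j + N * w j"] yj by simp
        also have "\<dots> = \<psi> (redq q n x) + zsmul N (\<psi> (redq q n w))"
          by (simp add: Phi_add[OF cyc] Phi_smul[OF cyc])
        finally have Py: "\<psi> (redq q n y) = \<psi> (redq q n x) + zsmul N (\<psi> (redq q n w))" .
        have "zsmul (eps E p) (zsmul N (\<psi> (redq q n w))) = 0"
          using eps_primary[OF E0 p kA] by (simp add: zsmul_comm N_def PP_def m_def)
        hence "zsmul (eps E p) (\<psi> (redq q n y)) = zsmul (eps E p) (\<psi> (redq q n x))"
          unfolding Py zsmul_plus by simp
        thus "F p (zsmul (eps E p) (\<psi> (redq q n x))) = F p (zsmul (eps E p) (\<psi> (redq q n y)))" by simp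
      qed
    qed
    hence "pf n (\<lambda>x. f (\<psi> (redq q n x)))" by (simp add: fa)
    thus "f \<in> {f. polyfractal q n \<psi> f}" unfolding polyfractal_def pf_def by simp
  qed
qed


end
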